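(* Let $p_i(s)=\gamma_i/(m_is+d_i)$ for $i=1,\dots,n$, where $m_i\ge0$, $d_i>0$ and $\gamma_i>0$ for all $i$. Then there exists $h\in\mathrm{PR}\cap\mathscr{A}_0$ such that $p_1,\ldots,p_n\in\mathcal{P}_h$.
   Context: $\mathscr{H}_\infty$: functions analytic and bounded on $\mathrm{Re}(s)>0$; $\mathscr{A}_0$: those in $\mathscr{H}_\infty$ extending continuously to $j\mathbb{R}\cup\{\infty\}$. $g\in\mathrm{PR}$ if $g$ is analytic in $\mathrm{Re}(s)>0$, real for positive real $s$, and $\mathrm{Re}(g(s))\ge0$ for $\mathrm{Re}(s)>0$; $g\in\mathrm{ESPR}$ if moreover $g\in\mathscr{A}_0$ and $g-\epsilon\in\mathrm{PR}$ for some $\epsilon>0$. $\mathcal{P}_h:=\{p\in\mathscr{H}_\infty: p(0)\ne0,\ h(s)(1+p(s)/s)\in\mathrm{ESPR}\}$. *)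

theory Defs
  imports "HOL-Analysis.Analysis"
begin

definition RHP :: "complex set" where
  "RHP = {s. Re s > 0}"

definition cRHP :: "complex set" where
  "cRHP = {s. Re s \<ge> 0}"

definition Hinf :: "(complex \<Rightarrow> complex) set" where
  "Hinf = {f. f analytic_on RHP \<and> (\<exists>B. \<forall>s\<in>RHP. norm (f s) \<le> B)}"

definition A0 :: "(complex \<Rightarrow> complex) set" where
  "A0 = {f. f \<in> Hinf \<and>
          (\<exists>g. continuous_on cRHP g \<and> (\<forall>s\<in>RHP. g s = f s) \<and>
               (\<exists>L. \<forall>e>0. \<exists>R. \<forall>s\<in>cRHP. norm s \<ge> R \<longrightarrow> norm (g s - L) < e))}"

definition PR :: "(complex \<Rightarrow> complex) set" where
  "PR = {g. g analytic_on RHP \<and> (\<forall>x::real. x > 0 \<longrightarrow> g (complex_of_real x) \<in> \<real>) \<and>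
           (\<forall>s\<in>RHP. Re (g s) \<ge> 0)}"

definition ESPR :: "(complex \<Rightarrow> complex) set" where
  "ESPR = {g. g \<in> PR \<and> g \<in> A0 \<and> (\<exists>e::real. e > 0 \<and> (\<lambda>s. g s - complex_of_real e) \<in> PR)}"

definition Pset :: "(complex \<Rightarrow> complex) \<Rightarrow> (complex \<Rightarrow> complex) set" where
  "Pset h = {p. p \<in> Hinf \<and> p 0 \<noteq> 0 \<and> (\<lambda>s. h s * (1 + p s / s)) \<in> ESPR}"

end

theory Submission
  imports Defs
begin

lemma core:
  fixes x y a m d g e :: real
  assumes x: "x \<ge> 0" and a: "a \<ge> 1" and m: "m \<ge> 0" and d: "d > 0" and g: "g > 0"
    and ga: "8*g \<le> d*a" and e: "e > 0" "e \<le> 1/4" "2*e*a \<le> 1" "8*e*a*m \<le> d"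
    and eB: "2*e*a*((m+d)^2 + m*d*a) \<le> g*d"
  shows "e*((x+a)^2+y^2) \<le> x^2+y^2+a*x + g*((m*x+d)*(x+a) - m*y^2)/((m*x+d)^2+m^2*y^2)"
proof -
  define Q where "Q = (m*x+d)^2+m^2*y^2"
  define T where "T = g*((m*x+d)*(x+a) - m*y^2)/Q"
  have mxd: "m*x+d \<ge> d" using m x by simp
  have "(m*x+d)^2 > 0" using mxd d by simp
  then have Qpos: "Q > 0" unfolding Q_def by (simp add: add_pos_nonneg)
  have numge: "(m*x+d)*(x+a) \<ge> d*a"
    using mxd x a d by (intro mult_mono) auto
  have T1: "T \<ge> g*(d*a - m*y^2)/Q"
    unfolding T_def using numge g Qpos by (intro divide_right_mono mult_left_mono) auto
  have goal: "e*a^2 \<le> 3/4*y^2 + T + 3/4*x^2 + a*x/2"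
  proof (cases "2*m*y^2 \<ge> d*a")
    case True
    have da: "d*a > 0" using d a by simp
    then have mpos: "m > 0" using True m by (cases "m = 0") auto
    have y2: "y^2 \<ge> d*a/(2*m)" using True mpos by (simp add: field_simps)
    have "Q \<ge> m^2*y^2" unfolding Q_def by simp
    have "g*m*y^2/Q \<le> g/m"
    proof (cases "y = 0")
      case True then show ?thesis using g mpos by simp
    next
      case False
      then have "m^2*y^2 > 0" using mpos by simp
      then have "g*m*y^2/Q \<le> g*m*y^2/(m^2*y^2)"
        using \<open>Q \<ge> m^2*y^2\<close> g mpos by (intro divide_left_mono) auto
      also have "\<dots> = g/m" using False mpos by (simp add: power2_eq_square field_simps)
      finally show ?thesis .
    qed
    moreover have "T \<ge> - (g*m*y^2/Q)"
    proof -
      have "g*(d*a - m*y^2)/Q = g*d*a/Q - g*m*y^2/Q" by (simp add: right_diff_distrib diff_divide_distrib mult.assoc)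
      moreover have "g*d*a/Q \<ge> 0" using g d a Qpos by simp
      ultimately show ?thesis using T1 by linarith
    qed
    ultimately have T2: "T \<ge> -(g/m)" by linarith
    define K where "K = d*a/(8*m)"
    have 1: "e*a^2 \<le> K" unfolding K_def using e(4) mpos a by (simp add: field_simps power2_eq_square)
    have 2: "g/m \<le> K" unfolding K_def using ga mpos by (simp add: field_simps)
    have 3: "3/4*y^2 \<ge> 3*K" unfolding K_def using y2 by (simp add: field_simps)
    have 4: "x^2 \<ge> 0" "a*x \<ge> 0" using a x by auto
    have 5: "K \<ge> 0" unfolding K_def using d a mpos by simp
    from 1 2 3 4 5 T2 show ?thesis by linarith
  next
    case False
    then have "d*a - m*y^2 \<ge> d*a/2" by linarith
    then have T3: "T \<ge> g*(d*a/2)/Q" using T1 g Qpos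
      by (smt (verit) divide_right_mono mult_left_mono less_imp_le)
    have Tnn: "g*(d*a/2)/Q \<ge> 0" using g d a Qpos by simp
    show ?thesis
    proof (cases "x \<ge> 1")
      case True
      have "a*x/2 \<ge> a/2" using True a by simp
      moreover have "e*a^2 \<le> a/2" using e(3) a by (simp add: power2_eq_square field_simps)
      moreover have "x^2 \<ge> 0" "y^2 \<ge> 0" by auto
      ultimately show ?thesis using T3 Tnn by linarith
    next
      case False
      have "(m*x+d)^2 \<le> (m+d)^2" using False x m d
        by (intro power_mono) (auto simp: mult_left_le)
      moreover have "m^2*y^2 \<le> m*d*a"
      proof -
        have "m^2*y^2 = m*(m*y^2)" by (simp add: power2_eq_square)
        also have "\<dots> \<le> m*(d*a)"
        proof -
          have "m*y^2 \<ge> 0" using m by simp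
          then have "m*y^2 \<le> d*a" using \<open>\<not> d*a \<le> 2*m*y^2\<close> by linarith
          then show ?thesis using m by (intro mult_left_mono) auto
        qed
        finally show ?thesis by simp
      qed
      ultimately have QB: "Q \<le> (m+d)^2 + m*d*a" unfolding Q_def by linarith
      have "g*(d*a/2)/Q \<ge> g*(d*a/2)/((m+d)^2 + m*d*a)"
        using QB Qpos g d a by (intro divide_left_mono) auto
      moreover have "e*a^2 \<le> g*(d*a/2)/((m+d)^2 + m*d*a)"
      proof -
        have pos: "(m+d)^2 + m*d*a > 0" using d m a by (smt (verit) zero_le_power2 power2_less_0 mult_nonneg_nonneg zero_less_power)
        have "e*a^2*((m+d)^2 + m*d*a) = a/2*(2*e*a*((m+d)^2 + m*d*a))" by (simp add: power2_eq_square)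
        also have "\<dots> \<le> a/2*(g*d)" using eB a by (intro mult_left_mono) auto
        finally show ?thesis using pos by (simp add: field_simps)
      qed
      moreover have "x^2 \<ge> 0" "a*x \<ge> 0" using a x by auto
      moreover have "y^2 \<ge> 0" by auto
      ultimately show ?thesis using T3 by linarith
    qed
  qed
  have "e*((x+a)^2+y^2) = e*x^2 + 2*e*a*x + e*y^2 + e*a^2" by (simp add: power2_eq_square algebra_simps)
  moreover have "e*x^2 \<le> x^2/4" using e mult_right_mono[of e "1/4" "x^2"] by simp
  moreover have "e*y^2 \<le> y^2/4" using e mult_right_mono[of e "1/4" "y^2"] by simp
  moreover have "2*e*a*x \<le> a*x/2" using e a x mult_right_mono[of e "1/4" "2*a*x"] by simp
  ultimately show ?thesis using goal unfolding T_def Q_def by linarith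
qed


lemma RHP_open: "open RHP" unfolding RHP_def by (rule open_halfspace_Re_gt)

lemma norm_le_add:
  assumes "Re s \<ge> 0" "a \<ge> 0"
  shows "norm s \<le> norm (s + complex_of_real a)"
proof -
  have "(norm s)^2 \<le> (norm (s + complex_of_real a))^2"
  proof -
    have "(Re s)^2 \<le> (Re s + a)^2" using assms by (intro power_mono) auto
    then show ?thesis unfolding cmod_power2 by simp
  qed
  then show ?thesis by (rule power2_le_imp_le) simp
qed

lemma a_le_norm:
  assumes "Re s \<ge> 0"
  shows "a \<le> norm (s + complex_of_real a)"
proof -
  have "a \<le> Re (s + complex_of_real a)" using assms by simp
  also have "\<dots> \<le> norm (s + complex_of_real a)" by (rule complex_Re_le_cmod)
  finally show ?thesis .
qed

lemma d_le_norm: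
  assumes "Re s \<ge> 0" "m \<ge> 0"
  shows "d \<le> norm (complex_of_real m * s + complex_of_real d)"
proof -
  have "d \<le> Re (complex_of_real m * s + complex_of_real d)" using assms by simp
  also have "\<dots> \<le> norm (complex_of_real m * s + complex_of_real d)" by (rule complex_Re_le_cmod)
  finally show ?thesis .
qed

lemma lim_helper:
  assumes C: "C \<ge> 0" and b: "\<forall>s\<in>cRHP. s \<noteq> 0 \<longrightarrow> norm (G s - L) \<le> C / norm s"
  shows "\<forall>e>0. \<exists>R. \<forall>s\<in>cRHP. norm s \<ge> R \<longrightarrow> norm (G s - L) < e"
proof (intro allI impI)
  fix e :: real assume e: "e > 0"
  show "\<exists>R. \<forall>s\<in>cRHP. norm s \<ge> R \<longrightarrow> norm (G s - L) < e"
  proof (intro exI ballI impI)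
    fix s assume s: "s \<in> cRHP" "norm s \<ge> (C+1)/e"
    have Rpos: "(C+1)/e > 0" using C e by simp
    then have ns: "norm s > 0" using s by linarith
    then have "norm (G s - L) \<le> C / norm s" using b s by auto
    also have "\<dots> \<le> C / ((C+1)/e)"
    proof -
      have P: "0 < norm s * ((C+1)/e)" by (rule mult_pos_pos[OF ns Rpos])
      show ?thesis by (rule divide_left_mono[OF s(2) C P])
    qed
    also have "\<dots> = C*e/(C+1)" by simp
    also have "\<dots> < e" using C e by (simp add: field_simps)
    finally show "norm (G s - L) < e" .
  qed
qed

lemma A0I:
  assumes "f \<in> Hinf" "continuous_on cRHP g" "\<forall>s\<in>RHP. g s = f s"
    "\<forall>e>0. \<exists>R. \<forall>s\<in>cRHP. norm s \<ge> R \<longrightarrow> norm (g s - L) < e"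
  shows "f \<in> A0"
  unfolding A0_def using assms by blast

lemma h_PR_A0:
  assumes a: "a > 0"
  shows "(\<lambda>s. s / (s + complex_of_real a)) \<in> PR \<inter> A0"
proof -
  have nz: "s + complex_of_real a \<noteq> 0" if "Re s \<ge> 0" for s
  proof
    assume "s + complex_of_real a = 0"
    then have "Re (s + complex_of_real a) = 0" by simp
    then show False using that a by simp
  qed
  have hol: "(\<lambda>s. s / (s + complex_of_real a)) holomorphic_on RHP"
    using nz by (intro holomorphic_intros) (auto simp: RHP_def)
  then have an: "(\<lambda>s. s / (s + complex_of_real a)) analytic_on RHP"
    using analytic_on_open[OF RHP_open] by simp
  have re: "Re (s / (s + complex_of_real a)) \<ge> 0" if "Re s \<ge> 0" for s
    unfolding Re_divide using that a by (intro divide_nonneg_nonneg) (auto simp: algebra_simps)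
  have real: "complex_of_real x / (complex_of_real x + complex_of_real a) \<in> \<real>" for x
  proof -
    have "complex_of_real x / (complex_of_real x + complex_of_real a) = complex_of_real (x/(x+a))" by simp
    then show ?thesis by (simp only: Reals_of_real)
  qed
  have PR: "(\<lambda>s. s / (s + complex_of_real a)) \<in> PR"
    unfolding PR_def mem_Collect_eq
  proof (intro conjI an allI impI ballI)
    fix x :: real show "complex_of_real x / (complex_of_real x + complex_of_real a) \<in> \<real>" by (rule real)
  next
    fix s assume "s \<in> RHP" then show "0 \<le> Re (s / (s + complex_of_real a))" by (intro re) (simp add: RHP_def)
  qed
  have bnd: "norm (s / (s + complex_of_real a)) \<le> 1" if "Re s \<ge> 0" for s
  proof -
    have "norm s \<le> norm (s + complex_of_real a)" using norm_le_add[OF that] a by simp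
    then show ?thesis using nz[OF that] by (simp add: norm_divide divide_le_eq_1)
  qed
  have Hinf: "(\<lambda>s. s / (s + complex_of_real a)) \<in> Hinf"
    unfolding Hinf_def mem_Collect_eq
  proof (intro conjI an exI[of _ 1] ballI)
    fix s assume "s \<in> RHP" then have "Re s \<ge> 0" by (simp add: RHP_def)
    then show "norm (s / (s + complex_of_real a)) \<le> 1" by (rule bnd)
  qed
  have cont: "continuous_on cRHP (\<lambda>s. s / (s + complex_of_real a))"
    using nz by (intro continuous_intros) (auto simp: cRHP_def)
  have lim: "\<forall>e>0. \<exists>R. \<forall>s\<in>cRHP. norm s \<ge> R \<longrightarrow> norm (s / (s + complex_of_real a) - 1) < e"
  proof (rule lim_helper[where C=a])
    show "a \<ge> 0" using a by simp
    show "\<forall>s\<in>cRHP. s \<noteq> 0 \<longrightarrow> norm (s / (s + complex_of_real a) - 1) \<le> a / norm s"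
    proof (intro ballI impI)
      fix s assume s: "s \<in> cRHP" "s \<noteq> 0"
      then have r: "Re s \<ge> 0" by (simp add: cRHP_def)
      have "s / (s + complex_of_real a) - 1 = - complex_of_real a / (s + complex_of_real a)"
        using nz[OF r] by (simp add: field_simps)
      then have "norm (s / (s + complex_of_real a) - 1) = a / norm (s + complex_of_real a)"
        using a by (simp add: norm_divide)
      also have "\<dots> \<le> a / norm s"
      proof -
        have N: "norm s \<le> norm (s + complex_of_real a)" using norm_le_add[OF r] a by simp
        have "norm s > 0" using s by simp
        then have P: "0 < norm (s + complex_of_real a) * norm s" using N by (intro mult_pos_pos) auto
        show ?thesis using divide_left_mono[OF N _ P] a by simp
      qed
      finally show "norm (s / (s + complex_of_real a) - 1) \<le> a / norm s" .
    qed
  qed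
  have A0: "(\<lambda>s. s / (s + complex_of_real a)) \<in> A0"
    by (rule A0I[OF Hinf cont _ lim]) simp
  show ?thesis using PR A0 by simp
qed

lemma p_Hinf:
  assumes m: "m \<ge> 0" and d: "d > 0" and g: "g > 0"
  shows "(\<lambda>s. complex_of_real g / (complex_of_real m * s + complex_of_real d)) \<in> Hinf"
proof -
  have nz: "complex_of_real m * s + complex_of_real d \<noteq> 0" if "Re s \<ge> 0" for s
    using d_le_norm[OF that m, of d] d by auto
  have "(\<lambda>s. complex_of_real g / (complex_of_real m * s + complex_of_real d)) holomorphic_on RHP"
    using nz by (intro holomorphic_intros) (auto simp: RHP_def)
  then have an: "(\<lambda>s. complex_of_real g / (complex_of_real m * s + complex_of_real d)) analytic_on RHP"
    using analytic_on_open[OF RHP_open] by simp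
  have bnd: "norm (complex_of_real g / (complex_of_real m * s + complex_of_real d)) \<le> g/d" if "Re s \<ge> 0" for s
  proof -
    have N: "d \<le> norm (complex_of_real m * s + complex_of_real d)" using d_le_norm[OF that m, of d] .
    have "0 < norm (complex_of_real m * s + complex_of_real d)" using N d by linarith
    then have P: "0 < norm (complex_of_real m * s + complex_of_real d) * d" using d by (rule mult_pos_pos)
    have "g / norm (complex_of_real m * s + complex_of_real d) \<le> g / d"
      using divide_left_mono[OF N _ P] g by simp
    then show ?thesis using g by (simp add: norm_divide)
  qed
  show ?thesis unfolding Hinf_def mem_Collect_eq
  proof (intro conjI an exI[of _ "g/d"] ballI)
    fix s assume "s \<in> RHP" then have "Re s \<ge> 0" by (simp add: RHP_def)
    then show "norm (complex_of_real g / (complex_of_real m * s + complex_of_real d)) \<le> g/d" by (rule bnd)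
  qed
qed


lemma ReG_formula:
  fixes s :: complex and a m d g :: real
  assumes x: "Re s \<ge> 0" and d: "d > 0" and m: "m \<ge> 0" and a: "a > 0"
  shows "Re ((s + complex_of_real g / (complex_of_real m * s + complex_of_real d)) / (s + complex_of_real a))
    = (Re s^2 + Im s^2 + a*Re s + g*((m*Re s+d)*(Re s+a) - m*Im s^2)/((m*Re s+d)^2+m^2*Im s^2))
      / ((Re s + a)^2 + Im s^2)"
proof -
  define x where "x = Re s"
  define y where "y = Im s"
  define Q where "Q = (m*x+d)^2+m^2*y^2"
  have mxd: "m*x+d \<ge> d" using m x unfolding x_def by simp
  have "(m*x+d)^2 > 0" using mxd d by simp
  then have Qpos: "Q > 0" unfolding Q_def by (simp add: add_pos_nonneg)
  have ReP: "Re (complex_of_real g / (complex_of_real m * s + complex_of_real d)) = g*(m*x+d)/Q"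
    unfolding Re_divide Q_def x_def y_def by (simp add: power_mult_distrib)
  have ImP: "Im (complex_of_real g / (complex_of_real m * s + complex_of_real d)) = -(g*m*y)/Q"
    unfolding Im_divide Q_def x_def y_def by (simp add: power_mult_distrib)
  have "Re ((s + complex_of_real g / (complex_of_real m * s + complex_of_real d)) / (s + complex_of_real a))
     = ((x + g*(m*x+d)/Q)*(x+a) + (y - g*m*y/Q)*y)/((x+a)^2+y^2)"
    unfolding Re_divide using ReP ImP by (simp add: x_def y_def)
  also have "(x + g*(m*x+d)/Q)*(x+a) + (y - g*m*y/Q)*y = x^2 + y^2 + a*x + g*((m*x+d)*(x+a) - m*y^2)/Q"
    using Qpos by (simp add: field_simps power2_eq_square)
  finally show ?thesis unfolding x_def y_def Q_def .
qed

lemma f_ESPR: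
  assumes a: "a \<ge> 1" and m: "m \<ge> 0" and d: "d > 0" and g: "g > 0" and ga: "8*g \<le> d*a"
  shows "(\<lambda>s. s / (s + complex_of_real a) *
              (1 + complex_of_real g / (complex_of_real m * s + complex_of_real d) / s)) \<in> ESPR"
proof -
  define P where "P = (\<lambda>s. complex_of_real g / (complex_of_real m * s + complex_of_real d))"
  define F where "F = (\<lambda>s. s / (s + complex_of_real a) *
              (1 + complex_of_real g / (complex_of_real m * s + complex_of_real d) / s))"
  define G where "G = (\<lambda>s. (s + P s) / (s + complex_of_real a))"
  have a0: "a > 0" using a by simp
  have nzA: "s + complex_of_real a \<noteq> 0" if "Re s \<ge> 0" for s
  proof
    assume "s + complex_of_real a = 0"
    then have "Re (s + complex_of_real a) = 0" by simp
    then show False using that a by simp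
  qed
  have nzP: "complex_of_real m * s + complex_of_real d \<noteq> 0" if "Re s \<ge> 0" for s
    using d_le_norm[OF that m, of d] d by auto
  have FG: "F s = G s" if "Re s \<ge> 0" "s \<noteq> 0" for s
  proof -
    have 1: "1 + P s / s = (s + P s) / s" using that(2) by (simp add: field_simps)
    have "F s = s / (s + complex_of_real a) * (1 + P s / s)" unfolding F_def P_def by simp
    also have "\<dots> = s / (s + complex_of_real a) * ((s + P s) / s)" by (simp only: 1)
    also have "\<dots> = (s + P s) / (s + complex_of_real a)" using that(2) by simp
    finally show ?thesis unfolding G_def .
  qed
  have hol: "F holomorphic_on RHP"
    unfolding F_def
  proof (intro holomorphic_intros)
    fix s assume "s \<in> RHP" then have "Re s > 0" by (simp add: RHP_def)
    then show "s + complex_of_real a \<noteq> 0" "complex_of_real m * s + complex_of_real d \<noteq> 0" "s \<noteq> 0"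
      using nzA nzP by auto
  qed
  then have an: "F analytic_on RHP" using analytic_on_open[OF RHP_open] by simp
  have hol2: "(\<lambda>s. F s - complex_of_real e) holomorphic_on RHP" for e
    using hol by (intro holomorphic_intros)
  then have an2: "(\<lambda>s. F s - complex_of_real e) analytic_on RHP" for e
    using analytic_on_open[OF RHP_open] by simp
  have realF: "F (complex_of_real x) \<in> \<real>" for x
  proof -
    have "F (complex_of_real x) = complex_of_real (x / (x + a) * (1 + g / (m*x + d) / x))"
      unfolding F_def by simp
    then show ?thesis by (simp only: Reals_of_real)
  qed
  have realF2: "F (complex_of_real x) - complex_of_real e \<in> \<real>" for x e
    using realF by (intro Reals_diff) auto
  define e where "e = min (1/4) (min (1/(2*a)) (min (d/(8*a*(m+1))) (g*d/(2*a*((m+d)^2+m*d*a+1)))))"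
  have pos1: "(m+d)^2+m*d*a+1 > 0" using m d a by (simp add: add_nonneg_pos)
  have e0: "e > 0" unfolding e_def using a0 m d g pos1 by simp
  have e1: "e \<le> 1/4" unfolding e_def by (rule min.cobounded1)
  have e2: "2*e*a \<le> 1"
  proof -
    have "e \<le> 1/(2*a)" unfolding e_def by (simp only: min.bounded_iff order_refl simp_thms)
    then show ?thesis using a0 by (simp add: field_simps)
  qed
  have e3: "8*e*a*m \<le> d"
  proof -
    have "e \<le> d/(8*a*(m+1))" unfolding e_def by (simp only: min.bounded_iff order_refl simp_thms)
    moreover have X: "8*a*(m+1) > 0" using a0 m by simp
    ultimately have "e*(8*a*(m+1)) \<le> d" by (simp add: pos_le_divide_eq)
    then have "8*e*a*(m+1) \<le> d" by (simp add: algebra_simps)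
    moreover have "8*e*a*m \<le> 8*e*a*(m+1)" using e0 a0 by simp
    ultimately show ?thesis by linarith
  qed
  have e4: "2*e*a*((m+d)^2 + m*d*a) \<le> g*d"
  proof -
    have "e \<le> g*d/(2*a*((m+d)^2+m*d*a+1))" unfolding e_def by (simp only: min.bounded_iff order_refl simp_thms)
    moreover have X: "2*a*((m+d)^2+m*d*a+1) > 0" using a0 pos1 by simp
    ultimately have "e*(2*a*((m+d)^2+m*d*a+1)) \<le> g*d" by (simp add: pos_le_divide_eq)
    then have "2*e*a*((m+d)^2+m*d*a+1) \<le> g*d" by (simp add: algebra_simps)
    moreover have "2*e*a*((m+d)^2 + m*d*a) \<le> 2*e*a*((m+d)^2+m*d*a+1)" using e0 a0 by simp
    ultimately show ?thesis by linarith
  qed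
  have ReF: "Re (F s) \<ge> e" if "s \<in> RHP" for s
  proof -
    have s: "Re s > 0" using that by (simp add: RHP_def)
    then have s0: "s \<noteq> 0" by auto
    have D: "(Re s + a)^2 + Im s^2 > 0" using s a0 by (simp add: add_pos_nonneg)
    have "e*((Re s+a)^2+Im s^2) \<le> Re s^2+Im s^2+a*Re s + g*((m*Re s+d)*(Re s+a) - m*Im s^2)/((m*Re s+d)^2+m^2*Im s^2)"
      using core[of "Re s" a m d g e "Im s"] s a m d g ga e0 e1 e2 e3 e4 by simp
    then have "e \<le> (Re s^2+Im s^2+a*Re s + g*((m*Re s+d)*(Re s+a) - m*Im s^2)/((m*Re s+d)^2+m^2*Im s^2)) / ((Re s+a)^2+Im s^2)"
      using D by (simp add: pos_le_divide_eq)
    also have "\<dots> = Re (G s)" unfolding G_def P_def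
      using ReG_formula[of s d m a g] s d m a0 by simp
    also have "\<dots> = Re (F s)" using FG[of s] s s0 by simp
    finally show ?thesis .
  qed
  have PR1: "F \<in> PR"
    unfolding PR_def mem_Collect_eq
  proof (intro conjI an allI impI ballI)
    fix x :: real show "F (complex_of_real x) \<in> \<real>" by (rule realF)
  next
    fix s assume "s \<in> RHP" then show "0 \<le> Re (F s)" using ReF e0 by force
  qed
  have PR2: "(\<lambda>s. F s - complex_of_real e) \<in> PR"
    unfolding PR_def mem_Collect_eq
  proof (intro conjI an2 allI impI ballI)
    fix x :: real show "F (complex_of_real x) - complex_of_real e \<in> \<real>" by (rule realF2)
  next
    fix s assume "s \<in> RHP" then show "0 \<le> Re (F s - complex_of_real e)" using ReF by simp
  qed
  have normP: "norm (P s) \<le> g/d" if "Re s \<ge> 0" for s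
  proof -
    have N: "d \<le> norm (complex_of_real m * s + complex_of_real d)" using d_le_norm[OF that m, of d] .
    have "0 < norm (complex_of_real m * s + complex_of_real d)" using N d by linarith
    then have Pp: "0 < norm (complex_of_real m * s + complex_of_real d) * d" using d by (rule mult_pos_pos)
    have "g / norm (complex_of_real m * s + complex_of_real d) \<le> g / d"
      using divide_left_mono[OF N _ Pp] g by simp
    then show ?thesis using g unfolding P_def by (simp add: norm_divide)
  qed
  have bndG: "norm (G s) \<le> 1 + (g/d)/a" if "Re s \<ge> 0" for s
  proof -
    have N1: "norm s \<le> norm (s + complex_of_real a)" using norm_le_add[OF that] a0 by simp
    have N2: "a \<le> norm (s + complex_of_real a)" by (rule a_le_norm[OF that])
    have Np: "norm (s + complex_of_real a) > 0" using N2 a0 by linarith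
    have "norm (G s) = norm (s + P s) / norm (s + complex_of_real a)"
      unfolding G_def by (simp add: norm_divide)
    also have "\<dots> \<le> (norm s + g/d) / norm (s + complex_of_real a)"
      using norm_triangle_ineq[of s "P s"] normP[OF that] Np by (intro divide_right_mono) auto
    also have "\<dots> = norm s / norm (s + complex_of_real a) + (g/d) / norm (s + complex_of_real a)"
      by (simp add: add_divide_distrib)
    also have "\<dots> \<le> 1 + (g/d)/a"
    proof (rule add_mono)
      show "norm s / norm (s + complex_of_real a) \<le> 1" using N1 Np by simp
      have "0 < norm (s + complex_of_real a) * a" using Np a0 by (rule mult_pos_pos)
      then show "(g/d) / norm (s + complex_of_real a) \<le> (g/d)/a"
        using divide_left_mono[OF N2, of "g/d"] g d by simp
    qed
    finally show ?thesis .
  qed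
  have Hinf: "F \<in> Hinf"
    unfolding Hinf_def mem_Collect_eq
  proof (intro conjI an exI[of _ "1 + (g/d)/a"] ballI)
    fix s assume "s \<in> RHP" then have r: "Re s > 0" by (simp add: RHP_def)
    then have "F s = G s" proof -
      have "s \<noteq> 0" using r by (intro notI) simp
      then show ?thesis using FG[of s] r by simp
    qed
    then show "norm (F s) \<le> 1 + (g/d)/a" using bndG[of s] r by simp
  qed
  have cont: "continuous_on cRHP G"
    unfolding G_def P_def using nzA nzP by (intro continuous_intros) (auto simp: cRHP_def)
  have eqR: "\<forall>s\<in>RHP. G s = F s"
  proof
    fix s assume "s \<in> RHP" then have r: "Re s > 0" by (simp add: RHP_def)
    then show "G s = F s" proof -
      have "s \<noteq> 0" using r by (intro notI) simp
      then show ?thesis using FG[of s] r by simp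
    qed
  qed
  have lim: "\<forall>e>0. \<exists>R. \<forall>s\<in>cRHP. norm s \<ge> R \<longrightarrow> norm (G s - 1) < e"
  proof (rule lim_helper[where C="g/d + a"])
    show "g/d + a \<ge> 0" using g d a0 by simp
    show "\<forall>s\<in>cRHP. s \<noteq> 0 \<longrightarrow> norm (G s - 1) \<le> (g/d + a) / norm s"
    proof (intro ballI impI)
      fix s assume s: "s \<in> cRHP" "s \<noteq> 0"
      then have r: "Re s \<ge> 0" by (simp add: cRHP_def)
      have "G s - 1 = (P s - complex_of_real a) / (s + complex_of_real a)"
        unfolding G_def using nzA[OF r] by (simp add: field_simps)
      then have "norm (G s - 1) = norm (P s - complex_of_real a) / norm (s + complex_of_real a)"
        by (simp add: norm_divide)
      also have "\<dots> \<le> (g/d + a) / norm (s + complex_of_real a)"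
      proof -
        have "norm (P s - complex_of_real a) \<le> norm (P s) + norm (complex_of_real a)"
          by (rule norm_triangle_ineq4)
        also have "\<dots> \<le> g/d + a" using normP[OF r] a0 by simp
        finally show ?thesis by (intro divide_right_mono) auto
      qed
      also have "\<dots> \<le> (g/d + a) / norm s"
      proof -
        have N: "norm s \<le> norm (s + complex_of_real a)" using norm_le_add[OF r] a0 by simp
        have "norm s > 0" using s by simp
        then have Pp: "0 < norm (s + complex_of_real a) * norm s" using N by (intro mult_pos_pos) auto
        show ?thesis using divide_left_mono[OF N _ Pp] g d a0 by simp
      qed
      finally show "norm (G s - 1) \<le> (g/d + a) / norm s" .
    qed
  qed
  have A0: "F \<in> A0" by (rule A0I[OF Hinf cont eqR lim])
  have "F \<in> ESPR" unfolding ESPR_def using PR1 A0 PR2 e0 by blast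
  then show ?thesis unfolding F_def .
qed


theorem corollary1:
  fixes n :: nat and m d \<gamma> :: "nat \<Rightarrow> real"
  assumes "\<forall>i\<in>{1..n}. m i \<ge> 0"
      and "\<forall>i\<in>{1..n}. d i > 0"
      and "\<forall>i\<in>{1..n}. \<gamma> i > 0"
  shows "\<exists>h. h \<in> PR \<inter> A0 \<and>
           (\<forall>i\<in>{1..n}. (\<lambda>s. complex_of_real (\<gamma> i) /
                              (complex_of_real (m i) * s + complex_of_real (d i))) \<in> Pset h)"
proof -
  define a where "a = 1 + (\<Sum>i\<in>{1..n}. 8*\<gamma> i/d i)"
  have nn: "8*\<gamma> i/d i \<ge> 0" if "i\<in>{1..n}" for i
    using assms that by (simp add: less_imp_le)
  have S: "(\<Sum>i\<in>{1..n}. 8*\<gamma> i/d i) \<ge> 0" using nn by (rule sum_nonneg)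
  have a1: "a \<ge> 1" unfolding a_def using S by simp
  have ga: "8*\<gamma> i \<le> d i * a" if i: "i\<in>{1..n}" for i
  proof -
    have "8*\<gamma> i/d i \<le> (\<Sum>i\<in>{1..n}. 8*\<gamma> i/d i)"
      using nn i by (intro member_le_sum) auto
    also have "\<dots> \<le> a" unfolding a_def by simp
    finally have "8*\<gamma> i/d i \<le> a" .
    moreover have "d i > 0" using assms i by simp
    ultimately show ?thesis by (simp add: pos_divide_le_eq mult.commute)
  qed
  show ?thesis
  proof (intro exI[of _ "\<lambda>s. s / (s + complex_of_real a)"] conjI ballI)
    show "(\<lambda>s. s / (s + complex_of_real a)) \<in> PR \<inter> A0" using a1 by (intro h_PR_A0) simp
  next
    fix i assume i: "i \<in> {1..n}"
    have m: "m i \<ge> 0" and d: "d i > 0" and g: "\<gamma> i > 0" using assms i by auto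
    show "(\<lambda>s. complex_of_real (\<gamma> i) / (complex_of_real (m i) * s + complex_of_real (d i)))
          \<in> Pset (\<lambda>s. s / (s + complex_of_real a))"
      unfolding Pset_def mem_Collect_eq
    proof (intro conjI)
      show "(\<lambda>s. complex_of_real (\<gamma> i) / (complex_of_real (m i) * s + complex_of_real (d i))) \<in> Hinf"
        by (rule p_Hinf[OF m d g])
      show "complex_of_real (\<gamma> i) / (complex_of_real (m i) * 0 + complex_of_real (d i)) \<noteq> 0"
        using d g by simp
      show "(\<lambda>s. s / (s + complex_of_real a) *
              (1 + complex_of_real (\<gamma> i) / (complex_of_real (m i) * s + complex_of_real (d i)) / s)) \<in> ESPR"
        by (rule f_ESPR[OF a1 m d g ga[OF i]])
    qed
  qed
qed

end
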